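(* Assume the standing setting of the context. Let $(x,y)\in\Lambda$ with $y>0$ and let $a\in W(x,y)$. Then \[ \Big[\frac{x-1}{y},\,a\Big]\cap A\subseteq W(x,y). \]
   Context: Setting. Let $\Lambda\subset\mathbb{R}^2$ be the (discrete) set of holonomy vectors of saddle connections of a Veech translation surface, normalized at a cusp of its Veech group as in Kumanduri–Sanchez–Wang. Distinguished vector. $(x_0,y_0)\in\Lambda$ is the vector with $y_0>0$ the smallest positive $y$-component in $\Lambda$, and $x_0>0$ the smallest positive $x$-component among vectors of $\Lambda$ with $y$-component $y_0$. Cusp parameters. $\alpha>0$ is the cusp parameter and $n\in\{1,2\}$. Transversal. \[ \Omega=\{(a,b): 0<b\le1,\ \tfrac{x_0}{y_0}b-\tfrac1{y_0}\le a<(\tfrac{x_0}{y_0}+n\alpha)b-\tfrac1{y_0}\}. \] Its top edge is $A=[\tfrac{x_0-1}{y_0},\tfrac{x_0-1}{y_0}+n\alpha)\subset\mathbb{R}$, identified with $\Omega\cap\{b=1\}$ via $a\mapsto(a,1)$. Winners. A vector $(x,y)\in\Lambda$ is a candidate winning vector at $(a,b)$ if $y>0$ and $0<bx-ay\le1$. The winner at $(a,b)\in\Omega$ is the candidate with the largest $x/y$ (least slope), with ties broken by choosing the shortest. Winning sets. For $(x,y)\in\Lambda$ with $y>0$, $W(x,y)=\{a\in A: (x,y)\text{ is the winner at }(a,1)\}$. Standing fact: every point of $A$ has a winner. *)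

theory Defs
  imports "HOL-Analysis.Analysis"
begin

definition candidate :: "(real \<times> real) set \<Rightarrow> real \<Rightarrow> real \<Rightarrow> real \<times> real \<Rightarrow> bool" where
  "candidate \<Lambda> a b p \<longleftrightarrow> p \<in> \<Lambda> \<and> snd p > 0 \<and>
     0 < b * fst p - a * snd p \<and> b * fst p - a * snd p \<le> 1"

definition is_winner :: "(real \<times> real) set \<Rightarrow> real \<Rightarrow> real \<Rightarrow> real \<times> real \<Rightarrow> bool" where
  "is_winner \<Lambda> a b p \<longleftrightarrow> candidate \<Lambda> a b p \<and>
     (\<forall>q. candidate \<Lambda> a b q \<and> q \<noteq> p \<longrightarrow>
        fst q / snd q < fst p / snd p \<or>
        (fst q / snd q = fst p / snd p \<and> norm p < norm q))"

definition topEdge :: "real \<Rightarrow> real \<Rightarrow> nat \<Rightarrow> real \<Rightarrow> real set" where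
  "topEdge x0 y0 n \<alpha> = {(x0 - 1) / y0 ..< (x0 - 1) / y0 + real n * \<alpha>}"

definition winning_set :: "(real \<times> real) set \<Rightarrow> real set \<Rightarrow> real \<times> real \<Rightarrow> real set" where
  "winning_set \<Lambda> A p = {a \<in> A. is_winner \<Lambda> a 1 p}"

end

theory Submission
  imports Defs
begin

theorem mainTheorem5:
  fixes \<Lambda> :: "(real \<times> real) set" and x0 y0 \<alpha> :: real and n :: nat and x y a :: real
  assumes discrete: "\<And>r. finite {p \<in> \<Lambda>. norm p \<le> r}"
    and x0y0_in: "(x0, y0) \<in> \<Lambda>" and y0_pos: "y0 > 0"
    and y0_min: "\<And>u v. (u, v) \<in> \<Lambda> \<Longrightarrow> v > 0 \<Longrightarrow> y0 \<le> v"
    and x0_pos: "x0 > 0"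
    and x0_min: "\<And>u. (u, y0) \<in> \<Lambda> \<Longrightarrow> u > 0 \<Longrightarrow> x0 \<le> u"
    and alpha_pos: "\<alpha> > 0" and n12: "n \<in> {1, 2}"
    and winners_exist: "\<And>t. t \<in> topEdge x0 y0 n \<alpha> \<Longrightarrow> \<exists>p. is_winner \<Lambda> t 1 p"
    and xy_in: "(x, y) \<in> \<Lambda>" and y_pos: "y > 0"
    and a_win: "a \<in> winning_set \<Lambda> (topEdge x0 y0 n \<alpha>) (x, y)"
  shows "{(x - 1) / y .. a} \<inter> topEdge x0 y0 n \<alpha> \<subseteq> winning_set \<Lambda> (topEdge x0 y0 n \<alpha>) (x, y)"
proof
  fix t assume t: "t \<in> {(x - 1) / y .. a} \<inter> topEdge x0 y0 n \<alpha>"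
  have aw: "is_winner \<Lambda> a 1 (x, y)" and aA: "a \<in> topEdge x0 y0 n \<alpha>"
    using a_win unfolding winning_set_def by auto
  have ca: "0 < x - a * y" "x - a * y \<le> 1" using aw unfolding is_winner_def candidate_def by auto
  have ta: "t \<le> a" and tl: "(x - 1) / y \<le> t" using t by auto
  have "x - 1 \<le> t * y" using tl y_pos by (simp add: divide_le_eq)
  moreover have "a * y \<ge> t * y" using ta y_pos by (simp add: mult_right_mono)
  ultimately have "0 < x - t * y" "x - t * y \<le> 1" using ca by linarith+
  then have ct: "candidate \<Lambda> t 1 (x, y)" using xy_in y_pos unfolding candidate_def by simp
  have xa: "a < x / y" using ca y_pos by (simp add: less_divide_eq)
  have "is_winner \<Lambda> t 1 (x, y)"
    unfolding is_winner_def
  proof (intro conjI ct allI impI)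
    fix q assume q: "candidate \<Lambda> t 1 q \<and> q \<noteq> (x, y)"
    obtain u v where qe: "q = (u, v)" by force
    have qv: "v > 0" "q \<in> \<Lambda>" "0 < u - t * v" "u - t * v \<le> 1" using q qe unfolding candidate_def by auto
    show "fst q / snd q < fst (x, y) / snd (x, y) \<or>
        fst q / snd q = fst (x, y) / snd (x, y) \<and> norm (x, y) < norm q"
    proof (cases "u / v < x / y")
      case True then show ?thesis using qe by simp
    next
      case False
      hence ge: "x / y \<le> u / v" by simp
      have "a < u / v" using xa ge by linarith
      hence c1: "0 < u - a * v" using qv by (simp add: less_divide_eq)
      have "a * v \<ge> t * v" using ta qv by (simp add: mult_right_mono)
      hence "u - a * v \<le> 1" using qv by linarith
      hence "candidate \<Lambda> a 1 q" using c1 qv qe unfolding candidate_def by auto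
      hence "u / v < x / y \<or> (u / v = x / y \<and> norm (x, y) < norm q)"
        using aw q qe unfolding is_winner_def by auto
      then show ?thesis using False qe by auto
    qed
  qed
  then show "t \<in> winning_set \<Lambda> (topEdge x0 y0 n \<alpha>) (x, y)"
    using t unfolding winning_set_def by auto
qed

end
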